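(* Let $C\in\mathbb{R}^{r\times n}$, $d\in\mathbb{R}^r$, where the system $Cx\ge d$ contains the constraints $x_j\ge0$ and $-x_j\ge-1$ for all $j\in[n]$, and let $\mathcal{X}=\{x\in\{0,1\}^n\mid Cx\ge d\}\ne\emptyset$. For $i\in[m]$ let $a_{i0}\in\mathbb{R}$, $a_i\in\mathbb{R}^n$ with $a_{i0}+a_i^\top x>0$ for all $x\in\mathcal{X}$, and \[ \mathcal{G}=\Bigl\{(\rho,y)=\bigl((\rho^i)_{i\in[m]},(y^i)_{i\in[m]}\bigr)\Bigm| x\in\mathcal{X},\ (\rho^i,y^i)=\frac{(1,x)}{a_{i0}+a_i^\top x}\ \text{for }i\in[m]\Bigr\}. \] For $k\in[n]$ let $\mathcal{R}^k=\{(\rho,y,u)\mid (\rho^i,y^i,u)\in\mathcal{R}^k_i\ \text{for all } i\in[m]\}$ (with $\mathcal{R}^k_i$ defined in the context). Then \[ \operatorname{proj}_{(\rho,y)}(\mathcal{R}^1)\supseteq\operatorname{proj}_{(\rho,y)}(\mathcal{R}^2)\supseteq\cdots\supseteq\operatorname{proj}_{(\rho,y)}(\mathcal{R}^n)=\operatorname{conv}(\mathcal{G}). \]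
   Context: $\mathrm{RLT}_k(\mathcal{X})$: for each row $c_lx\ge d_l$ of $Cx\ge d$ and each pair of disjoint $S,T\subseteq[n]$ with $|S\cup T|=k$, expand $(c_lx-d_l)\prod_{s\in S}x_s\prod_{t\in T}(1-x_t)\ge0$, reduce to a multilinear polynomial using $x_j^2=x_j$, and replace each monomial $\prod_{j\in e}x_j$ ($e\ne\emptyset$) by a variable $z_e$ (the empty monomial is $1$); the variables are $z_e$ for $e\subseteq[n]$, $1\le|e|\le\min(k+1,n)$. For $\rho\ge0$, "$w\in\rho\,\mathrm{RLT}_k(\mathcal{X})$" means $w=(w_e)$ satisfies these linear inequalities with $z$ replaced by $w$ and every constant term multiplied by $\rho$. For $i\in[m]$, $\mathcal{R}^k_i$ is the set of $(\rho^i,y^i,u)\in\mathbb{R}\times\mathbb{R}^n\times\mathbb{R}^{\{S\subseteq[n]:1\le|S|\le k\}}$ such that there is $w^i$ with: $\rho^i\ge0$, $w^i\in\rho^i\,\mathrm{RLT}_k(\mathcal{X})$, $y^i_j=w^i_{\{j\}}$ for $j\in[n]$, $a_{i0}\rho^i+a_i^\top y^i=1$, and for every $S\subseteq[n]$ with $1\le|S|\le k$: $u_S=\bigl(a_{i0}+\sum_{j\in S}a_{ij}\bigr)w^i_S+\sum_{r\in[n]\setminus S}a_{ir}w^i_{S\cup\{r\}}$. ($u_S$ models $\prod_{j\in S}x_j$ and $w^i_S$ models $\prod_{j\in S}x_j/(a_{i0}+a_i^\top x)$.) *)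

theory Defs
  imports "HOL-Analysis.Analysis"
begin

text \<open>Conventions: the index set [n] is the finite type 'n, [m] is 'm, the rows [r] are 'r.
  Monomial variables z_e are modelled by a function on sets of indices; the empty monomial
  is mapped to the (scaled) constant rho.\<close>

definition lin_mono :: "real \<Rightarrow> ('n set \<Rightarrow> real) \<Rightarrow> 'n set \<Rightarrow> real" where
  "lin_mono \<rho> w e = (if e = {} then \<rho> else w e)"

text \<open>The product (c_l x - d_l) prod_S x_s prod_T (1 - x_t) is expanded as
  sum over U subset T of (-1)^|U| (sum_j c_lj x^(S u U u {j}) - d_l x^(S u U)).\<close>

definition in_scaled_RLT ::
  "real^'n::finite^'r::finite \<Rightarrow> real^'r \<Rightarrow> nat \<Rightarrow> real \<Rightarrow> ('n set \<Rightarrow> real) \<Rightarrow> bool" where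
  "in_scaled_RLT C d k \<rho> w \<longleftrightarrow>
     (\<forall>l S T. S \<inter> T = {} \<and> card (S \<union> T) = k \<longrightarrow>
        0 \<le> (\<Sum>U\<in>Pow T. (-1) ^ card U *
               ((\<Sum>j\<in>UNIV. C$l$j * lin_mono \<rho> w (insert j (S \<union> U)))
                - d$l * lin_mono \<rho> w (S \<union> U))))"

definition R_ki ::
  "real^'n::finite^'r::finite \<Rightarrow> real^'r \<Rightarrow> real^'m::finite \<Rightarrow> real^'n^'m \<Rightarrow> nat \<Rightarrow> 'm
     \<Rightarrow> (real \<times> (real^'n) \<times> ('n set \<Rightarrow> real)) set" where
  "R_ki C d a0 a k i = {(\<rho>i, yi, u). \<exists>w.
      \<rho>i \<ge> 0 \<and> in_scaled_RLT C d k \<rho>i w \<and>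
      (\<forall>j. yi$j = w {j}) \<and>
      a0$i * \<rho>i + (a$i) \<bullet> yi = 1 \<and>
      (\<forall>S. S \<noteq> {} \<and> card S \<le> k \<longrightarrow>
         u S = (a0$i + (\<Sum>j\<in>S. a$i$j)) * w S + (\<Sum>r\<in>-S. a$i$r * w (insert r S)))}"

definition R_k ::
  "real^'n::finite^'r::finite \<Rightarrow> real^'r \<Rightarrow> real^'m::finite \<Rightarrow> real^'n^'m \<Rightarrow> nat
     \<Rightarrow> ((real^'m) \<times> (real^'n^'m) \<times> ('n set \<Rightarrow> real)) set" where
  "R_k C d a0 a k = {(\<rho>, y, u). \<forall>i. (\<rho>$i, y$i, u) \<in> R_ki C d a0 a k i}"

definition proj_R_k ::
  "real^'n::finite^'r::finite \<Rightarrow> real^'r \<Rightarrow> real^'m::finite \<Rightarrow> real^'n^'m \<Rightarrow> nat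
     \<Rightarrow> ((real^'m) \<times> (real^'n^'m)) set" where
  "proj_R_k C d a0 a k = {(\<rho>, y). \<exists>u. (\<rho>, y, u) \<in> R_k C d a0 a k}"

definition feas_X :: "real^'n::finite^'r::finite \<Rightarrow> real^'r \<Rightarrow> (real^'n) set" where
  "feas_X C d = {x. (\<forall>j. x$j \<in> {0, 1}) \<and> (\<forall>l. (C *v x)$l \<ge> d$l)}"

definition G_set ::
  "real^'n::finite^'r::finite \<Rightarrow> real^'r \<Rightarrow> real^'m::finite \<Rightarrow> real^'n^'m
     \<Rightarrow> ((real^'m) \<times> (real^'n^'m)) set" where
  "G_set C d a0 a = (\<lambda>x. ((\<chi> i. 1 / (a0$i + a$i \<bullet> x)), (\<chi> i. \<chi> j. x$j / (a0$i + a$i \<bullet> x))))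
                      ` feas_X C d"

end

theory Submission
  imports Defs
begin


definition delta :: "('n set \<Rightarrow> real) \<Rightarrow> 'n set \<Rightarrow> 'n set \<Rightarrow> real" where
  "delta F S T = (\<Sum>U\<in>Pow T. (-1) ^ card U * F (S \<union> U))"

lemma delta_insert:
  assumes "finite T" "t \<notin> T"
  shows "delta F S (insert t T) = delta F S T - delta F (insert t S) T"
proof -
  have inj: "inj_on (insert t) (Pow T)" using assms(2) by (simp add: inj_on_def) (metis PowD Set.set_insert insert_ident subset_iff)
  have disj: "Pow T \<inter> insert t ` Pow T = {}" using assms(2) by blast
  have "delta F S (insert t T) = (\<Sum>U\<in>Pow T. (-1) ^ card U * F (S \<union> U))
        + (\<Sum>U\<in>insert t ` Pow T. (-1) ^ card U * F (S \<union> U))"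
    unfolding delta_def Pow_insert using assms(1) disj
    by (simp add: sum.union_disjoint)
  also have "(\<Sum>U\<in>insert t ` Pow T. (-1) ^ card U * F (S \<union> U))
      = (\<Sum>U\<in>Pow T. (-1) ^ card (insert t U) * F (S \<union> insert t U))"
    by (simp add: sum.reindex[OF inj])
  also have "\<dots> = (\<Sum>U\<in>Pow T. - ((-1) ^ card U * F (insert t S \<union> U)))"
  proof (rule sum.cong)
    fix U assume "U \<in> Pow T"
    then have "finite U" "t \<notin> U" using assms finite_subset by auto
    then show "(-1) ^ card (insert t U) * F (S \<union> insert t U) = - ((-1) ^ card U * F (insert t S \<union> U))"
      by simp
  qed simp
  finally show ?thesis unfolding delta_def by (simp add: sum_negf)
qed

lemma delta_sum: "delta (\<lambda>A. \<Sum>x\<in>X. f x A) S T = (\<Sum>x\<in>X. delta (f x) S T)"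
  unfolding delta_def by (simp add: sum_distrib_left sum.swap[of _ X])

lemma delta_scale: "delta (\<lambda>A. c * f A) S T = c * delta f S T"
  unfolding delta_def by (simp add: sum_distrib_left algebra_simps)

lemma delta_diff: "delta (\<lambda>A. f A - g A) S T = delta f S T - delta g S T"
  unfolding delta_def by (simp add: sum_subtractf algebra_simps)

lemma delta_add: "delta (\<lambda>A. f A + g A) S T = delta f S T + delta g S T"
  unfolding delta_def by (simp add: sum.distrib algebra_simps)

lemma delta_ins_in: "j \<in> S \<Longrightarrow> delta (\<lambda>A. L (insert j A)) S T = delta L S T"
  unfolding delta_def by (simp add: insert_absorb)

lemma delta_ins_out:
  assumes "finite T" "j \<in> T"
  shows "delta (\<lambda>A. L (insert j A)) S T = 0"
proof -
  have T: "T = insert j (T - {j})" using assms by auto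
  have "delta (\<lambda>A. L (insert j A)) (insert j S) (T - {j}) = delta (\<lambda>A. L (insert j A)) S (T - {j})"
    unfolding delta_def by simp
  then show ?thesis using delta_insert[of "T - {j}" j "\<lambda>A. L (insert j A)" S] assms T by simp
qed

lemma delta_indic:
  assumes "finite T"
  shows "delta (\<lambda>A. if A \<subseteq> S' then 1 else 0) S T = (if S \<subseteq> S' \<and> T \<inter> S' = {} then 1 else 0)"
  using assms
proof (induction T arbitrary: S rule: finite_induct)
  case empty then show ?case by (simp add: delta_def)
next
  case (insert t T)
  then show ?case by (simp add: delta_insert) 
qed

lemma moebius:
  assumes "finite T"
  shows "(\<Sum>V\<in>Pow T. delta L (e \<union> V) (T - V)) = L e"
  using assms
proof (induction T rule: finite_induct)
  case empty then show ?case by (simp add: delta_def)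
next
  case (insert t T)
  have inj: "inj_on (insert t) (Pow T)" using insert(2) by (simp add: inj_on_def) (metis PowD Set.set_insert insert_ident subset_iff)
  have disj: "Pow T \<inter> insert t ` Pow T = {}" using insert(2) by blast
  have fin: "finite (Pow T)" using insert by simp
  have "(\<Sum>V\<in>Pow (insert t T). delta L (e \<union> V) (insert t T - V))
     = (\<Sum>V\<in>Pow T. delta L (e \<union> V) (insert t T - V)) + (\<Sum>V\<in>Pow T. delta L (e \<union> insert t V) (insert t T - insert t V))"
    unfolding Pow_insert using fin disj by (simp add: sum.union_disjoint sum.reindex[OF inj])
  also have "\<dots> = (\<Sum>V\<in>Pow T. delta L (e \<union> V) (T - V))"
  proof -
    have "\<And>V. V \<in> Pow T \<Longrightarrow> delta L (e \<union> V) (insert t T - V) + delta L (e \<union> insert t V) (insert t T - insert t V)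
         = delta L (e \<union> V) (T - V)"
    proof -
      fix V assume V: "V \<in> Pow T"
      have 1: "insert t T - V = insert t (T - V)" using V insert(2) by auto
      have 2: "insert t T - insert t V = T - V" using V insert(2) by auto
      have 3: "e \<union> insert t V = insert t (e \<union> V)" by auto
      show "delta L (e \<union> V) (insert t T - V) + delta L (e \<union> insert t V) (insert t T - insert t V)
         = delta L (e \<union> V) (T - V)"
        unfolding 1 2 3 using insert(1,2) by (simp add: delta_insert)
    qed
    then show ?thesis by (simp add: sum.distrib[symmetric])
  qed
  finally show ?case using insert by simp
qed


definition Fl :: "real^'n::finite^'r::finite \<Rightarrow> real^'r \<Rightarrow> 'r \<Rightarrow> real \<Rightarrow> ('n set \<Rightarrow> real) \<Rightarrow> 'n set \<Rightarrow> real" where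
  "Fl C d l \<rho> w = (\<lambda>A. (\<Sum>j\<in>UNIV. C$l$j * lin_mono \<rho> w (insert j A)) - d$l * lin_mono \<rho> w A)"

lemma rlt_iff: "in_scaled_RLT C d k \<rho> w \<longleftrightarrow>
   (\<forall>l S T. S \<inter> T = {} \<and> card (S \<union> T) = k \<longrightarrow> 0 \<le> delta (Fl C d l \<rho> w) S T)"
  by (simp add: in_scaled_RLT_def delta_def Fl_def)

definition ind :: "'n set \<Rightarrow> real^'n::finite" where
  "ind S = (\<chi> j. if j \<in> S then 1 else 0)"

lemma inner_ind: "(b::real^'n::finite) \<bullet> ind S = (\<Sum>j\<in>UNIV. b$j * (if j \<in> S then 1 else 0))"
  by (simp add: inner_vec_def ind_def)

lemma ax_split:
  fixes b :: "real^'n::finite"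
  assumes "e \<subseteq> S"
  shows "(\<Sum>j\<in>e. b$j) + (\<Sum>r\<in>-e. b$r * (if r \<in> S then 1 else 0)) = b \<bullet> ind S"
proof -
  have "b \<bullet> ind S = (\<Sum>j\<in>UNIV - (-e). b$j * (if j \<in> S then 1 else 0)) + (\<Sum>r\<in>-e. b$r * (if r \<in> S then 1 else 0))"
    unfolding inner_ind by (rule sum.subset_diff) auto
  moreover have "UNIV - (-e) = e" by auto
  moreover have "(\<Sum>j\<in>e. b$j * (if j \<in> S then 1 else 0)) = (\<Sum>j\<in>e. b$j)"
    using assms by (intro sum.cong) auto
  ultimately show ?thesis by simp
qed

lemma Fl_delta:
  "delta (Fl C d l \<rho> w) S (-S) = ((C *v ind S)$l - d$l) * delta (lin_mono \<rho> w) S (-S)"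
proof -
  have "delta (Fl C d l \<rho> w) S (-S) = (\<Sum>j\<in>UNIV. C$l$j * delta (\<lambda>A. lin_mono \<rho> w (insert j A)) S (-S))
        - d$l * delta (lin_mono \<rho> w) S (-S)"
    unfolding Fl_def by (simp add: delta_diff delta_sum delta_scale)
  also have "(\<Sum>j\<in>UNIV. C$l$j * delta (\<lambda>A. lin_mono \<rho> w (insert j A)) S (-S))
     = (\<Sum>j\<in>UNIV. C$l$j * (if j \<in> S then 1 else 0) * delta (lin_mono \<rho> w) S (-S))"
    by (intro sum.cong) (auto simp: delta_ins_in delta_ins_out)
  also have "\<dots> = (C *v ind S)$l * delta (lin_mono \<rho> w) S (-S)"
    by (simp add: matrix_vector_mult_def ind_def sum_distrib_right)
  finally show ?thesis by (simp add: algebra_simps)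
qed

lemma lam_facts:
  fixes C :: "real^'n::finite^'r::finite"
  assumes bounds: "\<forall>j. (\<exists>l. C$l = axis j 1 \<and> d$l = 0) \<and> (\<exists>l. C$l = - axis j 1 \<and> d$l = -1)"
    and R: "in_scaled_RLT C d CARD('n) \<rho> w"
  shows "0 \<le> delta (lin_mono \<rho> w) S (-S)"
    and "ind S \<notin> feas_X C d \<Longrightarrow> delta (lin_mono \<rho> w) S (-S) = 0"
proof -
  let ?lam = "delta (lin_mono \<rho> w) S (-S)"
  have card: "card (S \<union> -S) = CARD('n)" by (metis Compl_partition)
  have key: "\<And>l. 0 \<le> ((C *v ind S)$l - d$l) * ?lam"
    using R card unfolding rlt_iff by (metis Fl_delta Compl_disjoint)
  have comp: "\<And>l. (C *v ind S)$l = C$l \<bullet> ind S"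
    by (simp add: matrix_vector_mult_def inner_vec_def)
  obtain j0 :: 'n where True by blast
  show "0 \<le> ?lam"
  proof (cases "j0 \<in> S")
    case True
    obtain l where l: "C$l = axis j0 1" "d$l = 0" using bounds by blast
    have "(C *v ind S)$l = 1" unfolding comp l using True by (simp add: inner_axis' ind_def)
    then show ?thesis using key[of l] l by simp
  next
    case False
    obtain l where l: "C$l = - axis j0 1" "d$l = -1" using bounds by blast
    have "(C *v ind S)$l = 0" unfolding comp l using False by (simp add: inner_axis' ind_def)
    then show ?thesis using key[of l] l by simp
  qed
  assume nf: "ind S \<notin> feas_X C d"
  have "\<forall>j. ind S $ j \<in> {0, 1}" by (simp add: ind_def)
  then obtain l where "(C *v ind S)$l < d$l" using nf unfolding feas_X_def by (auto simp: not_le)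
  then have "?lam \<le> 0" using key[of l] by (smt (verit) mult_neg_pos)
  with \<open>0 \<le> ?lam\<close> show "?lam = 0" by simp
qed


lemma binary_ind: assumes "\<forall>j. x$j \<in> {0, 1::real}" shows "x = ind {j. x$j = 1}"
  using assms by (auto simp: ind_def vec_eq_iff)

lemma point_in:
  fixes C :: "real^'n::finite^'r::finite" and a :: "real^'n^'m::finite"
  assumes x: "x \<in> feas_X C d" and pos: "\<forall>i. a0$i + a$i \<bullet> x > 0"
  shows "((\<chi> i. 1 / (a0$i + a$i \<bullet> x)), (\<chi> i. \<chi> j. x$j / (a0$i + a$i \<bullet> x))) \<in> proj_R_k C d a0 a k"
proof -
  define S0 where "S0 = {j. x$j = 1}"
  have xe: "x = ind S0" using x binary_ind unfolding feas_X_def S0_def by blast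
  define u :: "'n set \<Rightarrow> real" where "u e = (if e \<subseteq> S0 then 1 else 0)" for e
  have "(1 / (a0$i + a$i \<bullet> x), (\<chi> j. x$j / (a0$i + a$i \<bullet> x)), u) \<in> R_ki C d a0 a k i" for i
  proof -
    define D where "D = a0$i + a$i \<bullet> x"
    have D: "D > 0" using pos D_def by simp
    define w :: "'n set \<Rightarrow> real" where "w e = (if e \<subseteq> S0 then 1 else 0) / D" for e
    have lm: "lin_mono (1/D) w = (\<lambda>e. (if e \<subseteq> S0 then 1 else 0) / D)"
      by (auto simp: lin_mono_def w_def)
    have Fl: "Fl C d l (1/D) w = (\<lambda>A. (((C *v x)$l - d$l) / D) * (if A \<subseteq> S0 then 1 else 0))" for l
    proof
      fix A
      have cx: "(C *v x)$l = (\<Sum>j\<in>UNIV. C$l$j * (if j \<in> S0 then 1 else 0))"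
        unfolding xe by (simp add: matrix_vector_mult_def ind_def)
      show "Fl C d l (1/D) w A = (((C *v x)$l - d$l) / D) * (if A \<subseteq> S0 then 1 else 0)"
        unfolding Fl_def lm cx
        by (cases "A \<subseteq> S0") (auto simp: sum_divide_distrib[symmetric] diff_divide_distrib intro!: sum.cong)
    qed
    have rlt: "in_scaled_RLT C d k (1/D) w"
      unfolding rlt_iff
    proof (intro allI impI)
      fix l and S T :: "'n set" assume "S \<inter> T = {} \<and> card (S \<union> T) = k"
      have "d$l \<le> (C *v x)$l" using x unfolding feas_X_def by auto
      then have c: "0 \<le> ((C *v x)$l - d$l) / D" using D by simp
      show "0 \<le> delta (Fl C d l (1/D) w) S T"
        unfolding Fl delta_scale delta_indic[OF finite] using c by simp
    qed
    have y: "(\<chi> j. x$j / D) $ j = w {j}" for j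
      using x unfolding feas_X_def by (auto simp: w_def S0_def)
    have one: "a0$i * (1/D) + a$i \<bullet> (\<chi> j. x$j / D) = 1"
    proof -
      have "a$i \<bullet> (\<chi> j. x$j / D) = (a$i \<bullet> x) / D"
        by (simp add: inner_vec_def sum_divide_distrib)
      then show ?thesis using D by (simp add: D_def field_simps)
    qed
    have uu: "u e = (a0$i + (\<Sum>j\<in>e. a$i$j)) * w e + (\<Sum>r\<in>-e. a$i$r * w (insert r e))" for e
    proof (cases "e \<subseteq> S0")
      case True
      have "(\<Sum>r\<in>-e. a$i$r * w (insert r e)) = (\<Sum>r\<in>-e. a$i$r * (if r \<in> S0 then 1 else 0)) / D"
        unfolding sum_divide_distrib using True by (intro sum.cong) (auto simp: w_def)
      moreover have "(\<Sum>j\<in>e. a$i$j) + (\<Sum>r\<in>-e. a$i$r * (if r \<in> S0 then 1 else 0)) = a$i \<bullet> x"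
        unfolding xe by (rule ax_split[OF True])
      ultimately show ?thesis using True D unfolding u_def w_def D_def
        by (simp add: field_simps)
    next
      case False
      then show ?thesis by (auto simp: u_def w_def intro!: sum.neutral)
    qed
    show ?thesis unfolding R_ki_def using D rlt y one uu
      by (auto simp: D_def intro!: exI[of _ w])
  qed
  then show ?thesis unfolding proj_R_k_def R_k_def by (auto intro!: exI[of _ u])
qed


lemma R_ki_comb:
  assumes "(\<rho>1, y1, u1) \<in> R_ki C d a0 a k i" "(\<rho>2, y2, u2) \<in> R_ki C d a0 a k i"
    and st: "0 \<le> s" "0 \<le> t" "s + t = 1"
  shows "(s * \<rho>1 + t * \<rho>2, s *\<^sub>R y1 + t *\<^sub>R y2, \<lambda>e. s * u1 e + t * u2 e) \<in> R_ki C d a0 a k i"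
proof -
  obtain w1 where w1: "\<rho>1 \<ge> 0" "in_scaled_RLT C d k \<rho>1 w1" "\<forall>j. y1$j = w1 {j}"
    "a0$i * \<rho>1 + (a$i) \<bullet> y1 = 1"
    "\<forall>S. S \<noteq> {} \<and> card S \<le> k \<longrightarrow> u1 S = (a0$i + (\<Sum>j\<in>S. a$i$j)) * w1 S + (\<Sum>r\<in>-S. a$i$r * w1 (insert r S))"
    using assms(1) unfolding R_ki_def by auto
  obtain w2 where w2: "\<rho>2 \<ge> 0" "in_scaled_RLT C d k \<rho>2 w2" "\<forall>j. y2$j = w2 {j}"
    "a0$i * \<rho>2 + (a$i) \<bullet> y2 = 1"
    "\<forall>S. S \<noteq> {} \<and> card S \<le> k \<longrightarrow> u2 S = (a0$i + (\<Sum>j\<in>S. a$i$j)) * w2 S + (\<Sum>r\<in>-S. a$i$r * w2 (insert r S))"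
    using assms(2) unfolding R_ki_def by auto
  define w where "w e = s * w1 e + t * w2 e" for e
  have lm: "lin_mono (s * \<rho>1 + t * \<rho>2) w = (\<lambda>e. s * lin_mono \<rho>1 w1 e + t * lin_mono \<rho>2 w2 e)"
    by (auto simp: lin_mono_def w_def)
  have Fl: "Fl C d l (s * \<rho>1 + t * \<rho>2) w = (\<lambda>A. s * Fl C d l \<rho>1 w1 A + t * Fl C d l \<rho>2 w2 A)" for l
    unfolding Fl_def lm by (auto simp: sum.distrib sum_distrib_left algebra_simps)
  have rlt: "in_scaled_RLT C d k (s * \<rho>1 + t * \<rho>2) w"
    using w1(2) w2(2) st unfolding rlt_iff Fl delta_add delta_scale by auto
  have one: "a0$i * (s * \<rho>1 + t * \<rho>2) + (a$i) \<bullet> (s *\<^sub>R y1 + t *\<^sub>R y2) = 1"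
  proof -
    have "a0$i * (s * \<rho>1 + t * \<rho>2) + (a$i) \<bullet> (s *\<^sub>R y1 + t *\<^sub>R y2)
        = s * (a0$i * \<rho>1 + (a$i) \<bullet> y1) + t * (a0$i * \<rho>2 + (a$i) \<bullet> y2)"
      by (simp add: inner_add_right algebra_simps)
    then show ?thesis using w1(4) w2(4) st by simp
  qed
  have uu: "\<forall>S. S \<noteq> {} \<and> card S \<le> k \<longrightarrow> s * u1 S + t * u2 S = (a0$i + (\<Sum>j\<in>S. a$i$j)) * w S + (\<Sum>r\<in>-S. a$i$r * w (insert r S))"
    using w1(5) w2(5) by (auto simp: w_def sum.distrib sum_distrib_left algebra_simps)
  show ?thesis unfolding R_ki_def using st w1(1,3) w2(1,3) rlt one uu
    by (auto intro!: exI[of _ w] simp: w_def)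
qed

lemma proj_convex: "convex (proj_R_k C d a0 a k)"
  unfolding convex_def
proof (intro ballI allI impI)
  fix p q and s t :: real
  assume p: "p \<in> proj_R_k C d a0 a k" and q: "q \<in> proj_R_k C d a0 a k" and st: "0 \<le> s" "0 \<le> t" "s + t = 1"
  obtain \<rho>1 y1 u1 where p1: "p = (\<rho>1, y1)" "\<forall>i. (\<rho>1$i, y1$i, u1) \<in> R_ki C d a0 a k i"
    using p unfolding proj_R_k_def R_k_def by auto
  obtain \<rho>2 y2 u2 where q1: "q = (\<rho>2, y2)" "\<forall>i. (\<rho>2$i, y2$i, u2) \<in> R_ki C d a0 a k i"
    using q unfolding proj_R_k_def R_k_def by auto
  have "((s *\<^sub>R \<rho>1 + t *\<^sub>R \<rho>2)$i, (s *\<^sub>R y1 + t *\<^sub>R y2)$i, \<lambda>e. s * u1 e + t * u2 e) \<in> R_ki C d a0 a k i" for i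
      using R_ki_comb[OF p1(2)[rule_format, of i] q1(2)[rule_format, of i]] st by simp
  then have "\<forall>i. ((s *\<^sub>R \<rho>1 + t *\<^sub>R \<rho>2)$i, (s *\<^sub>R y1 + t *\<^sub>R y2)$i, \<lambda>e. s * u1 e + t * u2 e) \<in> R_ki C d a0 a k i" by blast
  then show "s *\<^sub>R p + t *\<^sub>R q \<in> proj_R_k C d a0 a k"
    unfolding p1 q1 proj_R_k_def R_k_def by auto
qed

lemma proj_mono:
  assumes "k < CARD('n::finite)"
  shows "proj_R_k (C :: real^'n^'r::finite) d a0 a (Suc k) \<subseteq> proj_R_k C d a0 a k"
proof -
  have rlt: "in_scaled_RLT C d k \<rho> w" if R: "in_scaled_RLT C d (Suc k) \<rho> w" for \<rho> w
    unfolding rlt_iff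
  proof (intro allI impI)
    fix l and S T :: "'n set" assume ST: "S \<inter> T = {} \<and> card (S \<union> T) = k"
    have "S \<union> T \<noteq> UNIV" using ST assms by auto
    then obtain t where t: "t \<notin> S \<union> T" by auto
    have c1: "card (insert t S \<union> T) = Suc k" "card (S \<union> insert t T) = Suc k"
      using ST t by (auto simp: card_insert_if)
    have "0 \<le> delta (Fl C d l \<rho> w) (insert t S) T" "0 \<le> delta (Fl C d l \<rho> w) S (insert t T)"
      using R c1 ST t unfolding rlt_iff by auto
    moreover have "delta (Fl C d l \<rho> w) S (insert t T) = delta (Fl C d l \<rho> w) S T - delta (Fl C d l \<rho> w) (insert t S) T"
      using t by (simp add: delta_insert)
    ultimately show "0 \<le> delta (Fl C d l \<rho> w) S T" by linarith
  qed
  have "R_ki C d a0 a (Suc k) i \<subseteq> R_ki C d a0 a k i" for i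
    unfolding R_ki_def using rlt by fastforce
  then show ?thesis unfolding proj_R_k_def R_k_def by blast
qed


lemma sum_supsets:
  fixes f :: "'n::finite set \<Rightarrow> real"
  shows "(\<Sum>V\<in>Pow (-e). f (e \<union> V)) = (\<Sum>S\<in>UNIV. if e \<subseteq> S then f S else (0::real))"
proof -
  have "(\<Sum>V\<in>Pow (-e). f (e \<union> V)) = (\<Sum>S\<in>{S. e \<subseteq> S}. f S)"
    by (rule sum.reindex_bij_witness[where i="\<lambda>S. S - e" and j="\<lambda>V. e \<union> V"]) auto
  also have "\<dots> = (\<Sum>S\<in>UNIV. if e \<subseteq> S then f S else 0)"
    by (simp add: sum.If_cases)
  finally show ?thesis .
qed

lemma moebius_full:
  fixes L :: "'n::finite set \<Rightarrow> real"
  shows "L e = (\<Sum>S\<in>UNIV. if e \<subseteq> S then delta L S (-S) else 0)"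
proof -
  have "L e = (\<Sum>V\<in>Pow (-e). delta L (e \<union> V) (-e - V))"
    using moebius[of "-e" L e] by simp
  also have "\<dots> = (\<Sum>V\<in>Pow (-e). (\<lambda>S. delta L S (-S)) (e \<union> V))"
    by (intro sum.cong) (auto simp: Diff_eq Int_commute)
  finally show ?thesis using sum_supsets[of "\<lambda>S. delta L S (-S)" e] by simp
qed

lemma moebius_unique:
  fixes \<mu> :: "'n::finite set \<Rightarrow> real"
  assumes "\<And>e. v e = (\<Sum>S\<in>UNIV. if e \<subseteq> S then \<mu> S else 0)"
  shows "delta v S (-S) = \<mu> S"
proof -
  have "v A = (\<Sum>S'\<in>UNIV. \<mu> S' * (if A \<subseteq> S' then 1 else 0))" for A
    unfolding assms by (intro sum.cong) auto
  then have "v = (\<lambda>A. \<Sum>S'\<in>UNIV. \<mu> S' * (if A \<subseteq> S' then 1 else 0))" by blast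
  then have "delta v S (-S) = (\<Sum>S'\<in>UNIV. \<mu> S' * (if S \<subseteq> S' \<and> -S \<inter> S' = {} then 1 else 0))"
    by (simp add: delta_sum delta_scale delta_indic)
  also have "\<dots> = (\<Sum>S'\<in>UNIV. if S' = S then \<mu> S' else 0)"
    by (intro sum.cong) auto
  finally show ?thesis by simp
qed




lemma proj_sub_hull:
  fixes C :: "real^'n::finite^'r::finite" and d :: "real^'r"
    and a0 :: "real^'m::finite" and a :: "real^'n^'m"
  assumes bounds: "\<forall>j. (\<exists>l. C$l = axis j 1 \<and> d$l = 0) \<and> (\<exists>l. C$l = - axis j 1 \<and> d$l = -1)"
    and pos: "\<forall>i. \<forall>x\<in>feas_X C d. a0$i + a$i \<bullet> x > 0"
  shows "proj_R_k C d a0 a CARD('n) \<subseteq> convex hull (G_set C d a0 a)"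
proof
  fix p assume "p \<in> proj_R_k C d a0 a CARD('n)"
  then obtain \<rho> y u where p: "p = (\<rho>, y)" and Ri: "\<forall>i. (\<rho>$i, y$i, u) \<in> R_ki C d a0 a CARD('n) i"
    unfolding proj_R_k_def R_k_def by auto
  have "\<forall>i. \<exists>w. \<rho>$i \<ge> 0 \<and> in_scaled_RLT C d CARD('n) (\<rho>$i) w \<and>
      (\<forall>j. y$i$j = w {j}) \<and> a0$i * \<rho>$i + (a$i) \<bullet> y$i = 1 \<and>
      (\<forall>S. S \<noteq> {} \<and> card S \<le> CARD('n) \<longrightarrow>
         u S = (a0$i + (\<Sum>j\<in>S. a$i$j)) * w S + (\<Sum>r\<in>-S. a$i$r * w (insert r S)))"
    using Ri unfolding R_ki_def by blast
  from choice[OF this] obtain W where W0: "\<forall>i. \<rho>$i \<ge> 0 \<and> in_scaled_RLT C d CARD('n) (\<rho>$i) (W i) \<and>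
      (\<forall>j. y$i$j = W i {j}) \<and> a0$i * \<rho>$i + (a$i) \<bullet> y$i = 1 \<and>
      (\<forall>S. S \<noteq> {} \<and> card S \<le> CARD('n) \<longrightarrow>
         u S = (a0$i + (\<Sum>j\<in>S. a$i$j)) * W i S + (\<Sum>r\<in>-S. a$i$r * W i (insert r S)))"
    by blast
  have W: "\<And>i. in_scaled_RLT C d CARD('n) (\<rho>$i) (W i)"
      "\<And>i j. y$i$j = W i {j}" "\<And>i. a0$i * \<rho>$i + (a$i) \<bullet> y$i = 1"
      "\<And>i S. S \<noteq> {} \<Longrightarrow> card S \<le> CARD('n) \<Longrightarrow>
         u S = (a0$i + (\<Sum>j\<in>S. a$i$j)) * W i S + (\<Sum>r\<in>-S. a$i$r * W i (insert r S))"
    using W0 by blast+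
  define L where "L i = lin_mono (\<rho>$i) (W i)" for i
  define lam where "lam i S = delta (L i) S (-S)" for i S
  define D where "D i S = a0$i + a$i \<bullet> ind S" for i S
  define mu where "mu i S = lam i S * D i S" for i S
  define v where "v e = (if e = {} then 1 else u e)" for e
  define Xs where "Xs = {S. ind S \<in> feas_X C d}"
  have F1: "0 \<le> lam i S" "S \<notin> Xs \<Longrightarrow> lam i S = 0" for i S
    using lam_facts[OF bounds W(1)[of i]] unfolding lam_def L_def Xs_def by auto
  have F2: "L i e = (\<Sum>S\<in>UNIV. if e \<subseteq> S then lam i S else 0)" for i e
    unfolding lam_def by (rule moebius_full)
  have Dpos: "S \<in> Xs \<Longrightarrow> D i S > 0" for i S
    using pos unfolding D_def Xs_def by auto
  have rho: "\<rho>$i = (\<Sum>S\<in>UNIV. lam i S)" for i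
    using F2[of i "{}"] by (simp add: L_def lin_mono_def)
  have yy: "y$i$j = (\<Sum>S\<in>UNIV. lam i S * (ind S $ j))" for i j
  proof -
    have "y$i$j = L i {j}" using W(2) by (simp add: L_def lin_mono_def)
    also have "\<dots> = (\<Sum>S\<in>UNIV. lam i S * (ind S $ j))"
      unfolding F2 by (intro sum.cong) (auto simp: ind_def)
    finally show ?thesis .
  qed
  have F3: "v e = (\<Sum>S\<in>UNIV. if e \<subseteq> S then mu i S else 0)" for i e
  proof (cases "e = {}")
    case True
    have "a$i \<bullet> y$i = (\<Sum>j\<in>UNIV. a$i$j * (\<Sum>S\<in>UNIV. lam i S * (ind S $ j)))"
      by (simp add: inner_vec_def yy)
    also have "\<dots> = (\<Sum>S\<in>UNIV. lam i S * (a$i \<bullet> ind S))"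
      unfolding inner_vec_def sum_distrib_left
      by (subst sum.swap) (simp add: algebra_simps inner_real_def)
    finally have "a$i \<bullet> y$i = (\<Sum>S\<in>UNIV. lam i S * (a$i \<bullet> ind S))" .
    then have "1 = (\<Sum>S\<in>UNIV. mu i S)"
      using W(3)[of i] unfolding rho mu_def D_def
      by (simp add: sum_distrib_left sum.distrib algebra_simps)
    then show ?thesis using True by (simp add: v_def)
  next
    case False
    have ce: "card e \<le> CARD('n)" by (simp add: card_mono)
    have "u e = (a0$i + (\<Sum>j\<in>e. a$i$j)) * L i e + (\<Sum>r\<in>-e. a$i$r * L i (insert r e))"
      using W(4)[OF False ce] False by (simp add: L_def lin_mono_def)
    also have "\<dots> = (\<Sum>S\<in>UNIV. (a0$i + (\<Sum>j\<in>e. a$i$j)) * (if e \<subseteq> S then lam i S else 0)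
          + (\<Sum>r\<in>-e. a$i$r * (if insert r e \<subseteq> S then lam i S else 0)))"
      by (simp only: F2 sum_distrib_left sum.distrib sum.swap[where A="-e"])
    also have "\<dots> = (\<Sum>S\<in>UNIV. if e \<subseteq> S then mu i S else 0)"
    proof (intro sum.cong refl)
      fix S
      show "(a0$i + (\<Sum>j\<in>e. a$i$j)) * (if e \<subseteq> S then lam i S else 0)
          + (\<Sum>r\<in>-e. a$i$r * (if insert r e \<subseteq> S then lam i S else 0)) = (if e \<subseteq> S then mu i S else 0)"
      proof (cases "e \<subseteq> S")
        case True
        have h1: "(\<Sum>r\<in>-e. a$i$r * (if insert r e \<subseteq> S then lam i S else 0))
            = lam i S * (\<Sum>r\<in>-e. a$i$r * (if r \<in> S then 1 else 0))"
          unfolding sum_distrib_left using True by (intro sum.cong) auto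
        have h2: "(\<Sum>j\<in>e. a$i$j) + (\<Sum>r\<in>-e. a$i$r * (if r \<in> S then 1 else 0)) = a$i \<bullet> ind S"
          by (rule ax_split[OF True])
        show ?thesis unfolding mu_def D_def h2[symmetric] h1 using True
          by (simp add: algebra_simps)
      next
        case False
        then show ?thesis by (auto intro!: sum.neutral)
      qed
    qed
    finally show ?thesis using False by (simp add: v_def)
  qed
  define M where "M S = delta v S (-S)" for S
  have F4: "mu i S = M S" for i S
    unfolding M_def by (rule moebius_unique[symmetric]) (rule F3)
  obtain i0 :: 'm where True by blast
  have lamM: "S \<in> Xs \<Longrightarrow> lam i S = M S / D i S" for i S
    using F4[where i=i and S=S] Dpos[where i=i and S=S] by (simp add: mu_def field_simps)
  have M0: "S \<in> Xs \<Longrightarrow> 0 \<le> M S" for S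
    using F4[where i=i0 and S=S] F1[where i=i0 and S=S] Dpos[where i=i0 and S=S] by (metis mu_def less_imp_le mult_nonneg_nonneg)
  have finXs: "finite Xs" by simp
  have lamsum: "(\<Sum>S\<in>UNIV. lam i S * f S) = (\<Sum>S\<in>Xs. M S * (f S / D i S))" for i f
  proof -
    have "(\<Sum>S\<in>UNIV. lam i S * f S) = (\<Sum>S\<in>Xs. lam i S * f S)"
      by (rule sum.mono_neutral_right) (auto simp: F1)
    also have "\<dots> = (\<Sum>S\<in>Xs. M S * (f S / D i S))"
      by (intro sum.cong) (auto simp: lamM)
    finally show ?thesis .
  qed
  have M1: "(\<Sum>S\<in>Xs. M S) = 1"
  proof -
    have "1 = (\<Sum>S\<in>UNIV. mu i0 S)" using F3[of "{}" i0] by (simp add: v_def)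
    also have "\<dots> = (\<Sum>S\<in>UNIV. lam i0 S * D i0 S)" by (simp add: mu_def)
    also have "\<dots> = (\<Sum>S\<in>Xs. M S)" unfolding lamsum
      by (intro sum.cong) (auto dest: Dpos[where i=i0])
    finally show ?thesis by simp
  qed
  define g where "g x = ((\<chi> i. 1 / (a0$i + a$i \<bullet> x)), (\<chi> i. \<chi> j. x$j / (a0$i + a$i \<bullet> x)))" for x :: "real^'n"
  have pe: "p = (\<Sum>S\<in>Xs. M S *\<^sub>R g (ind S))"
  proof -
    have "\<rho> = (\<Sum>S\<in>Xs. M S *\<^sub>R fst (g (ind S)))"
    proof (subst vec_eq_iff, intro allI)
      fix i
      have "\<rho>$i = (\<Sum>S\<in>UNIV. lam i S * 1)" by (simp add: rho)
      also have "\<dots> = (\<Sum>S\<in>Xs. M S * (1 / D i S))" by (rule lamsum)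
      finally show "\<rho>$i = (\<Sum>S\<in>Xs. M S *\<^sub>R fst (g (ind S))) $ i"
        by (simp add: g_def D_def)
    qed
    moreover have "y = (\<Sum>S\<in>Xs. M S *\<^sub>R snd (g (ind S)))"
    proof (subst vec_eq_iff, intro allI, subst vec_eq_iff, intro allI)
      fix i j
      have "y$i$j = (\<Sum>S\<in>Xs. M S * (ind S $ j / D i S))" by (simp add: yy lamsum)
      then show "y$i$j = (\<Sum>S\<in>Xs. M S *\<^sub>R snd (g (ind S))) $ i $ j"
        by (simp add: g_def D_def)
    qed
    ultimately show ?thesis unfolding p by (simp add: prod_eq_iff fst_sum snd_sum)
  qed
  have "g (ind S) \<in> G_set C d a0 a" if "S \<in> Xs" for S
    using that unfolding G_set_def Xs_def g_def by blast
  then show "p \<in> convex hull (G_set C d a0 a)" unfolding pe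
    by (intro convex_sum[OF finXs convex_convex_hull M1]) (auto simp: M0 hull_subset[THEN subsetD])
qed


theorem theorem3:
  fixes C :: "real^'n::finite^'r::finite" and d :: "real^'r"
    and a0 :: "real^'m::finite" and a :: "real^'n^'m"
  assumes bounds: "\<forall>j. (\<exists>l. C$l = axis j 1 \<and> d$l = 0) \<and> (\<exists>l. C$l = - axis j 1 \<and> d$l = -1)"
    and nonempty: "feas_X C d \<noteq> {}"
    and pos: "\<forall>i. \<forall>x\<in>feas_X C d. a0$i + a$i \<bullet> x > 0"
  shows "(\<forall>k. 1 \<le> k \<and> k < CARD('n) \<longrightarrow> proj_R_k C d a0 a (Suc k) \<subseteq> proj_R_k C d a0 a k)
         \<and> proj_R_k C d a0 a CARD('n) = convex hull (G_set C d a0 a)"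
proof -
  have A: "\<forall>k. 1 \<le> k \<and> k < CARD('n) \<longrightarrow> proj_R_k C d a0 a (Suc k) \<subseteq> proj_R_k C d a0 a k"
    using proj_mono by blast
  have B1: "proj_R_k C d a0 a CARD('n) \<subseteq> convex hull (G_set C d a0 a)"
    by (rule proj_sub_hull[OF bounds pos])
  have G: "G_set C d a0 a \<subseteq> proj_R_k C d a0 a CARD('n)"
  proof
    fix p assume "p \<in> G_set C d a0 a"
    then obtain x where x: "x \<in> feas_X C d"
      and p: "p = ((\<chi> i. 1 / (a0$i + a$i \<bullet> x)), (\<chi> i. \<chi> j. x$j / (a0$i + a$i \<bullet> x)))"
      unfolding G_set_def by blast
    show "p \<in> proj_R_k C d a0 a CARD('n)"
      unfolding p using point_in[OF x] pos x by blast
  qed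
  have B2: "convex hull (G_set C d a0 a) \<subseteq> proj_R_k C d a0 a CARD('n)"
    using hull_minimal[where S=convex, OF G] proj_convex by blast
  show ?thesis using A B1 B2 by blast
qed

end
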